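(* Let $\mathcal{T}$ be an MPQ-tree of an interval graph $G=(V,E)$, let $(x,y)\in E$ with $x$ over $y$ and $node(x)\neq node(y)$. If $node(y)$ is a P-node that is not a leaf of $\mathcal{T}$, then $(x,y)$ is not an interval edge.
   Context: Graphs are finite and simple; for $G=(V,E)$ and $e\in E$, $G-e=(V,E\setminus\{e\})$. An edge $(x,y)\in E$ of an interval graph $G$ is an interval edge if $G-(x,y)$ is an interval graph. An MPQ-tree of an interval graph $G=(V,E)$, $V=\{1,\dots,n\}$, is a rooted plane tree whose nodes are P-nodes and Q-nodes. Each P-node carries a (possibly empty) set of vertices. A Q-node has $k\ge 3$ ordered positions $1,\dots,k$; position $i$ carries a set $S_i\subseteq V$ (the $i$-th section) and a child subtree $T_i$, which may be empty. Every vertex $v$ is assigned to exactly one node $node(v)$: either $v$ lies in the set of the P-node $node(v)$, or $node(v)$ is a Q-node and $v$ lies exactly in the sections $S_{l(v)},\dots,S_{r(v)}$ of it, with $l(v)<r(v)$. For a node with child subtrees $T_1,\dots,T_k$, $V_i$ denotes the set of vertices assigned to nodes of $T_i$ ($V_i=\emptyset$ if $T_i$ is empty). The maximal cliques of $G$ are in bijection with the descending paths from the root which at a P-node continue into one of its children (stopping if there is none) and at a Q-node choose a position $i$ and continue into $T_i$ (stopping if $T_i$ is empty); the clique is the union of the sets of the visited P-nodes and the chosen sections. Reading these cliques left to right gives a linear order of the maximal cliques, and the orders obtained this way after arbitrarily permuting children of P-nodes and reversing the positions of Q-nodes are exactly the orders of the maximal cliques of $G$ in which the cliques containing any fixed vertex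 are consecutive. Moreover, for every Q-node with sections $S_1,\dots,S_k$: (a) $V_1\neq\emptyset$ and $V_k\ne\emptyset$; (b) $S_1\subseteq S_2$ and $S_k\subseteq S_{k-1}$; (c) $S_{i-1}\cap S_i\neq\emptyset$ for $2\le i\le k$; (d) $S_{i-1}\neq S_i$ for $2\le i\le k$; (e) $(S_i\cap S_{i+1})\setminus S_1\neq\emptyset$ and $(S_{i-1}\cap S_i)\setminus S_k\neq\emptyset$ for $2\le i\le k-1$; (f) $(S_{i-1}\cup V_{i-1})\setminus S_i\neq\emptyset$ and $(S_i\cup V_i)\setminus S_{i-1}\neq\emptyset$ for $2\le i\le k$; and further (g) no empty P-node has an empty P-node as its parent, (h) no P-node has exactly one child whose root is a P-node, (i) every child subtree of a P-node is nonempty. We say $x$ is over $y$ if $node(x)$ is the lowest common ancestor of $node(x)$ and $node(y)$ in $\mathcal{T}$. *)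

theory Defs
  imports Complex_Main "HOL-Library.Multiset"
begin

definition simple_graph :: "nat set \<Rightarrow> nat set set \<Rightarrow> bool" where
  "simple_graph V E \<longleftrightarrow> finite V \<and> E \<subseteq> {{u, v} | u v. u \<in> V \<and> v \<in> V \<and> u \<noteq> v}"

definition interval_graph :: "nat set \<Rightarrow> nat set set \<Rightarrow> bool" where
  "interval_graph V E \<longleftrightarrow> simple_graph V E \<and>
     (\<exists>l r :: nat \<Rightarrow> real. (\<forall>v\<in>V. l v \<le> r v) \<and>
        (\<forall>u\<in>V. \<forall>v\<in>V. u \<noteq> v \<longrightarrow>
            ({u, v} \<in> E \<longleftrightarrow> max (l u) (l v) \<le> min (r u) (r v))))"

definition interval_edge :: "nat set \<Rightarrow> nat set set \<Rightarrow> nat \<Rightarrow> nat \<Rightarrow> bool" where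
  "interval_edge V E x y \<longleftrightarrow> {x, y} \<in> E \<and> interval_graph V (E - {{x, y}})"

definition is_clique :: "nat set \<Rightarrow> nat set set \<Rightarrow> nat set \<Rightarrow> bool" where
  "is_clique V E C \<longleftrightarrow> C \<subseteq> V \<and> (\<forall>u\<in>C. \<forall>v\<in>C. u \<noteq> v \<longrightarrow> {u, v} \<in> E)"

definition max_clique :: "nat set \<Rightarrow> nat set set \<Rightarrow> nat set \<Rightarrow> bool" where
  "max_clique V E C \<longleftrightarrow> is_clique V E C \<and> (\<forall>D. is_clique V E D \<and> C \<subseteq> D \<longrightarrow> D = C)"

definition consecutive_clique_order :: "nat set \<Rightarrow> nat set set \<Rightarrow> nat set list \<Rightarrow> bool" where
  "consecutive_clique_order V E L \<longleftrightarrow> distinct L \<and> set L = {C. max_clique V E C} \<and>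
     (\<forall>v i j k. i \<le> j \<and> j \<le> k \<and> k < length L \<and> v \<in> L ! i \<and> v \<in> L ! k \<longrightarrow> v \<in> L ! j)"

text \<open>Empty stands for an empty (child) subtree. A P-node carries a vertex set and its
  list of children; a Q-node carries its list of positions, each being a section S_i together
  with the child subtree T_i (possibly Empty).\<close>
datatype mpq = Empty | PN "nat set" "mpq list" | QN "(nat set \<times> mpq) list"

fun child :: "mpq \<Rightarrow> nat \<Rightarrow> mpq" where
  "child Empty i = Empty"
| "child (PN S cs) i = (if i < length cs then cs ! i else Empty)"
| "child (QN secs) i = (if i < length secs then snd (secs ! i) else Empty)"

text \<open>Nodes are addressed by paths (lists of child positions) from the root.\<close>
fun sub :: "mpq \<Rightarrow> nat list \<Rightarrow> mpq" where
  "sub t [] = t"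
| "sub t (i # p) = sub (child t i) p"

fun labels :: "mpq \<Rightarrow> nat set" where
  "labels Empty = {}"
| "labels (PN S cs) = S \<union> \<Union> (labels ` set cs)"
| "labels (QN secs) = \<Union> ((\<lambda>p. fst p \<union> labels (snd p)) ` set secs)"

text \<open>The left-to-right list of cliques given by the descending paths.\<close>
fun cliques :: "mpq \<Rightarrow> nat set list" where
  "cliques Empty = []"
| "cliques (PN S cs) = (if cs = [] then [S] else concat (map (\<lambda>c. map ((\<union>) S) (cliques c)) cs))"
| "cliques (QN secs) = concat (map (\<lambda>p. if snd p = Empty then [fst p]
                                        else map ((\<union>) (fst p)) (cliques (snd p))) secs)"

inductive tree_equiv :: "mpq \<Rightarrow> mpq \<Rightarrow> bool" where
  "tree_equiv Empty Empty"
| "list_all2 tree_equiv cs ds \<Longrightarrow> mset es = mset ds \<Longrightarrow> tree_equiv (PN S cs) (PN S es)"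
| "list_all2 (\<lambda>a b. fst a = fst b \<and> tree_equiv (snd a) (snd b)) secs secs'
     \<Longrightarrow> tree_equiv (QN secs) (QN secs')"
| "list_all2 (\<lambda>a b. fst a = fst b \<and> tree_equiv (snd a) (snd b)) secs secs'
     \<Longrightarrow> tree_equiv (QN secs) (QN (rev secs'))"

definition occurs :: "mpq \<Rightarrow> nat \<Rightarrow> nat list \<Rightarrow> bool" where
  "occurs t v p \<longleftrightarrow> (case sub t p of
       Empty \<Rightarrow> False
     | PN S cs \<Rightarrow> v \<in> S
     | QN secs \<Rightarrow> (\<exists>i < length secs. v \<in> fst (secs ! i)))"

definition node :: "mpq \<Rightarrow> nat \<Rightarrow> nat list" where
  "node t v = (THE p. occurs t v p)"

text \<open>x is over y: node(x) is the lowest common ancestor of node(x) and node(y), i.e.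
  node(x) is an ancestor of (or equal to) node(y).\<close>
definition over :: "mpq \<Rightarrow> nat \<Rightarrow> nat \<Rightarrow> bool" where
  "over t x y \<longleftrightarrow> (\<exists>q. node t y = node t x @ q)"

definition is_PN :: "mpq \<Rightarrow> bool" where
  "is_PN t \<longleftrightarrow> (\<exists>S cs. t = PN S cs)"

text \<open>Conditions (a)-(f) on a Q-node (0-indexed positions 0..k-1).\<close>
definition Q_conditions :: "(nat set \<times> mpq) list \<Rightarrow> bool" where
  "Q_conditions secs \<longleftrightarrow> (let k = length secs; S = (\<lambda>i. fst (secs ! i));
       W = (\<lambda>i. labels (snd (secs ! i))) in
     k \<ge> 3 \<and>
     W 0 \<noteq> {} \<and> W (k - 1) \<noteq> {} \<and>
     S 0 \<subseteq> S 1 \<and> S (k - 1) \<subseteq> S (k - 2) \<and>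
     (\<forall>i. 1 \<le> i \<and> i < k \<longrightarrow> S (i - 1) \<inter> S i \<noteq> {}) \<and>
     (\<forall>i. 1 \<le> i \<and> i < k \<longrightarrow> S (i - 1) \<noteq> S i) \<and>
     (\<forall>i. 1 \<le> i \<and> i \<le> k - 2 \<longrightarrow>
          (S i \<inter> S (i + 1)) - S 0 \<noteq> {} \<and> (S (i - 1) \<inter> S i) - S (k - 1) \<noteq> {}) \<and>
     (\<forall>i. 1 \<le> i \<and> i < k \<longrightarrow>
          (S (i - 1) \<union> W (i - 1)) - S i \<noteq> {} \<and> (S i \<union> W i) - S (i - 1) \<noteq> {}))"

definition P_conditions :: "nat set \<Rightarrow> mpq list \<Rightarrow> bool" where
  "P_conditions S cs \<longleftrightarrow>
     (S = {} \<longrightarrow> (\<forall>c\<in>set cs. \<forall>cs'. c \<noteq> PN {} cs')) \<and>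
     \<not> (\<exists>c. cs = [c] \<and> is_PN c) \<and>
     (\<forall>c\<in>set cs. c \<noteq> Empty)"

definition is_MPQ_tree :: "nat set \<Rightarrow> nat set set \<Rightarrow> mpq \<Rightarrow> bool" where
  "is_MPQ_tree V E t \<longleftrightarrow>
     t \<noteq> Empty \<and>
     \<comment> \<open>every vertex is assigned to exactly one node; in a Q-node it lies exactly in
         sections l(v),...,r(v) with l(v) < r(v)\<close>
     (\<forall>v\<in>V. (\<exists>!p. occurs t v p) \<and>
        (\<forall>p secs. occurs t v p \<and> sub t p = QN secs \<longrightarrow>
           (\<exists>l r. l < r \<and> {i. i < length secs \<and> v \<in> fst (secs ! i)} = {l..r}))) \<and>
     \<comment> \<open>bijection between descending paths and maximal cliques\<close>
     distinct (cliques t) \<and> set (cliques t) = {C. max_clique V E C} \<and>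
     \<comment> \<open>the orders generated by the tree are exactly the consecutive clique orders\<close>
     {cliques t' | t'. tree_equiv t t'} = {L. consecutive_clique_order V E L} \<and>
     \<comment> \<open>structural conditions (a)-(i)\<close>
     (\<forall>p secs. sub t p = QN secs \<longrightarrow> Q_conditions secs) \<and>
     (\<forall>p S cs. sub t p = PN S cs \<longrightarrow> P_conditions S cs)"

end

theory Submission
  imports Defs
begin

inductive cpath :: "mpq \<Rightarrow> nat list \<Rightarrow> nat set \<Rightarrow> bool" where
  leaf: "cpath (PN S []) [] S"
| pn: "i < length cs \<Longrightarrow> cpath (cs!i) P D \<Longrightarrow> cpath (PN S cs) (i#P) (S \<union> D)"
| qe: "i < length secs \<Longrightarrow> snd (secs!i) = Empty \<Longrightarrow> cpath (QN secs) [i] (fst (secs!i))"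
| qn: "i < length secs \<Longrightarrow> cpath (snd (secs!i)) P D \<Longrightarrow> cpath (QN secs) (i#P) (fst (secs!i) \<union> D)"

fun at_set :: "mpq \<Rightarrow> nat \<Rightarrow> nat set" where
  "at_set Empty j = {}"
| "at_set (PN S cs) j = S"
| "at_set (QN secs) j = fst (secs ! j)"

definition wf :: "mpq \<Rightarrow> bool" where
  "wf t \<longleftrightarrow> (\<forall>p S cs. sub t p = PN S cs \<longrightarrow> (\<forall>c\<in>set cs. c \<noteq> Empty)) \<and>
            (\<forall>p secs. sub t p = QN secs \<longrightarrow> secs \<noteq> [])"

lemma cpath_Empty: "cpath Empty P C \<Longrightarrow> False"
  by (cases rule: cpath.cases) auto

lemma sub_Empty[simp]: "sub Empty p = Empty"
  by (induction p) auto

lemma sub_append: "sub t (p @ q) = sub (sub t p) q"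
  by (induction p arbitrary: t) auto

lemma occurs_append: "occurs t v (p @ q) = occurs (sub t p) v q"
  unfolding occurs_def by (simp add: sub_append)

lemma occurs_Cons: "occurs t v (i # q) = occurs (child t i) v q"
  unfolding occurs_def by simp

lemma wf_sub: "wf t \<Longrightarrow> wf (sub t p)"
  unfolding wf_def by (metis sub_append)

lemma wf_child: "wf t \<Longrightarrow> wf (child t i)"
  using wf_sub[of t "[i]"] by simp

lemma cpath_cliques: "cpath t P C \<Longrightarrow> C \<in> set (cliques t)"
proof (induction rule: cpath.induct)
  case (pn i cs P D S)
  then show ?case by (auto intro!: bexI[of _ "cs!i"])
next
  case (qe i secs)
  then show ?case by (auto intro!: bexI[of _ "secs!i"])
next
  case (qn i secs P D)
  then have "snd (secs!i) \<noteq> Empty" using cpath_Empty by auto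
  with qn show ?case by (auto intro!: bexI[of _ "secs!i"])
qed auto

lemma cliques_cpath: "C \<in> set (cliques t) \<Longrightarrow> \<exists>P. cpath t P C"
proof (induction t arbitrary: C)
  case Empty
  then show ?case by simp
next
  case (PN S cs)
  show ?case
  proof (cases "cs = []")
    case True
    then show ?thesis using PN.prems by (auto intro: cpath.leaf)
  next
    case False
    then obtain c D where c: "c \<in> set cs" "D \<in> set (cliques c)" "C = S \<union> D"
      using PN.prems by auto
    then obtain i where i: "i < length cs" "cs ! i = c" by (meson in_set_conv_nth)
    from PN.IH[OF c(1) c(2)] obtain P where "cpath c P D" by blast
    then show ?thesis using i c(3) cpath.pn[of i cs P D S] by auto
  qed
next
  case (QN secs)
  then obtain s where s: "s \<in> set secs" "C \<in> set (if snd s = Empty then [fst s] else map ((\<union>) (fst s)) (cliques (snd s)))"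
    by auto
  then obtain i where i: "i < length secs" "secs ! i = s" by (meson in_set_conv_nth)
  show ?case
  proof (cases "snd s = Empty")
    case True
    then show ?thesis using s i cpath.qe[of i secs] by auto
  next
    case False
    then obtain D where D: "D \<in> set (cliques (snd s))" "C = fst s \<union> D" using s by auto
    have "snd s \<in> Basic_BNFs.snds s" by (cases s) auto
    from QN.IH[OF s(1) this D(1)] obtain P where "cpath (snd s) P D" by blast
    then show ?thesis using i D cpath.qn[of i secs P D] by auto
  qed
qed

lemma ext: "wf t \<Longrightarrow> t \<noteq> Empty \<Longrightarrow> \<exists>P C. cpath t P C"
proof (induction t)
  case Empty
  then show ?case by simp
next
  case (PN S cs)
  show ?case
  proof (cases "cs = []")
    case True
    then show ?thesis using cpath.leaf by blast
  next
    case False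
    have w: "wf (cs!0)" using wf_child[OF PN.prems(1), of 0] False by simp
    have ne: "cs!0 \<noteq> Empty" using PN.prems(1) False unfolding wf_def
      by (metis length_greater_0_conv nth_mem sub.simps(1))
    from PN.IH[OF _ w ne] False obtain P C where "cpath (cs!0) P C" by auto
    then show ?thesis using cpath.pn[of 0 cs P C S] False by auto
  qed
next
  case (QN secs)
  have ne: "secs \<noteq> []" using QN.prems unfolding wf_def by (metis sub.simps(1))
  show ?case
  proof (cases "snd (secs!0) = Empty")
    case True
    then show ?thesis using cpath.qe[of 0 secs] ne by auto
  next
    case False
    have w: "wf (snd (secs!0))" using wf_child[OF QN.prems(1), of 0] ne by simp
    have "snd (secs!0) \<in> Basic_BNFs.snds (secs!0)" by (cases "secs!0") auto
    from QN.IH[OF _ this w False] ne obtain P C where "cpath (snd (secs!0)) P C" by auto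
    then show ?thesis using cpath.qn[of 0 secs P C] ne by auto
  qed
qed

lemma through: "wf t \<Longrightarrow> occurs t v p \<Longrightarrow> \<exists>P C. cpath t P C \<and> v \<in> C"
proof (induction p arbitrary: t)
  case Nil
  show ?case
  proof (cases t)
    case Empty
    then show ?thesis using Nil by (simp add: occurs_def)
  next
    case (PN S cs)
    then have vS: "v \<in> S" using Nil by (simp add: occurs_def)
    show ?thesis
    proof (cases "cs = []")
      case True
      then show ?thesis using PN vS cpath.leaf by blast
    next
      case False
      have w: "wf (cs!0)" using wf_child[OF Nil.prems(1), of 0] False PN by simp
      have ne: "cs!0 \<noteq> Empty" using Nil.prems(1) False PN unfolding wf_def
        by (metis length_greater_0_conv nth_mem sub.simps(1))
      from ext[OF w ne] obtain P C where "cpath (cs!0) P C" by auto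
      then show ?thesis using cpath.pn[of 0 cs P C S] False PN vS by auto
    qed
  next
    case (QN secs)
    then obtain i where i: "i < length secs" "v \<in> fst (secs!i)" using Nil by (auto simp add: occurs_def)
    show ?thesis
    proof (cases "snd (secs!i) = Empty")
      case True
      then show ?thesis using cpath.qe[of i secs] i QN by auto
    next
      case False
      have w: "wf (snd (secs!i))" using wf_child[OF Nil.prems(1), of i] i QN by simp
      from ext[OF w False] obtain P C where "cpath (snd (secs!i)) P C" by auto
      then show ?thesis using cpath.qn[of i secs P C] i QN by auto
    qed
  qed
next
  case (Cons i p)
  from Cons.prems have "occurs (child t i) v p" by (simp add: occurs_Cons)
  from Cons.IH[OF wf_child[OF Cons.prems(1)] this] obtain P C where
    PC: "cpath (child t i) P C" "v \<in> C" by blast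
  show ?case
  proof (cases t)
    case Empty
    then show ?thesis using PC cpath_Empty by auto
  next
    case (PN S cs)
    then show ?thesis using PC cpath.pn[of i cs P C S] cpath_Empty
      by (cases "i < length cs") auto
  next
    case (QN secs)
    then show ?thesis using PC cpath.qn[of i secs P C] cpath_Empty
      by (cases "i < length secs") auto
  qed
qed

lemma labels_occurs: "v \<in> labels t \<Longrightarrow> \<exists>p. occurs t v p"
proof (induction t)
  case Empty
  then show ?case by simp
next
  case (PN S cs)
  show ?case
  proof (cases "v \<in> S")
    case True
    then have "occurs (PN S cs) v []" by (simp add: occurs_def)
    then show ?thesis by blast
  next
    case False
    then obtain c where c: "c \<in> set cs" "v \<in> labels c" using PN.prems by auto
    then obtain i where i: "i < length cs" "cs ! i = c" by (meson in_set_conv_nth)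
    from PN.IH[OF c] obtain p where "occurs c v p" by blast
    then have "occurs (PN S cs) v (i#p)" using i by (simp add: occurs_Cons)
    then show ?thesis by blast
  qed
next
  case (QN secs)
  then obtain s where s: "s \<in> set secs" "v \<in> fst s \<or> v \<in> labels (snd s)" by auto
  then obtain i where i: "i < length secs" "secs ! i = s" by (meson in_set_conv_nth)
  show ?case
  proof (cases "v \<in> fst s")
    case True
    then have "occurs (QN secs) v []" using i by (auto simp add: occurs_def)
    then show ?thesis by blast
  next
    case False
    have "snd s \<in> Basic_BNFs.snds s" by (cases s) auto
    from QN.IH[OF s(1) this] False s obtain p where "occurs (snd s) v p" by blast
    then have "occurs (QN secs) v (i#p)" using i by (simp add: occurs_Cons)
    then show ?thesis by blast
  qed
qed

lemma F2: "cpath t P C \<Longrightarrow> v \<in> C \<Longrightarrow>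
   \<exists>k\<le>length P. v \<in> at_set (sub t (take k P)) (P!k) \<and> occurs t v (take k P)"
proof (induction rule: cpath.induct)
  case (leaf S)
  then show ?case by (auto simp: occurs_def)
next
  case (pn i cs P D S)
  show ?case
  proof (cases "v \<in> S")
    case True
    then show ?thesis by (rule_tac x=0 in exI) (auto simp: occurs_def)
  next
    case False
    then obtain k where "k \<le> length P" "v \<in> at_set (sub (cs!i) (take k P)) (P!k)" "occurs (cs!i) v (take k P)"
      using pn by auto
    then show ?thesis using pn(1)
      by (rule_tac x="Suc k" in exI) (auto simp: occurs_Cons)
  qed
next
  case (qe i secs)
  then show ?case by (rule_tac x=0 in exI) (auto simp: occurs_def)
next
  case (qn i secs P D)
  show ?case
  proof (cases "v \<in> fst (secs!i)")
    case True
    then show ?thesis using qn(1) by (rule_tac x=0 in exI) (auto simp: occurs_def)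
  next
    case False
    then obtain k where "k \<le> length P" "v \<in> at_set (sub (snd (secs!i)) (take k P)) (P!k)" "occurs (snd (secs!i)) v (take k P)"
      using qn by auto
    then show ?thesis using qn(1)
      by (rule_tac x="Suc k" in exI) (auto simp: occurs_Cons)
  qed
qed

lemma F3: "cpath t P C \<Longrightarrow> k \<le> length P \<Longrightarrow> at_set (sub t (take k P)) (P!k) \<subseteq> C"
proof (induction arbitrary: k rule: cpath.induct)
  case (pn i cs P D S)
  then show ?case by (cases k) auto
next
  case (qe i secs)
  then show ?case by (cases k) auto
next
  case (qn i secs P D)
  then show ?case by (cases k) auto
qed auto

lemma cm_split: "i < length xs \<Longrightarrow> concat (map f xs) = concat (map f (take i xs)) @ f (xs!i) @ concat (map f (drop (Suc i) xs))"
proof -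
  assume i: "i < length xs"
  have "concat (map f xs) = concat (map f (take i xs @ xs!i # drop (Suc i) xs))"
    using id_take_nth_drop[OF i] by simp
  then show ?thesis by simp
qed

lemma decomp: "sub t p \<noteq> Empty \<Longrightarrow> \<exists>A us vs. cliques t = us @ map ((\<union>) A) (cliques (sub t p)) @ vs"
proof (induction p arbitrary: t)
  case Nil
  show ?case by (rule exI[of _ "{}"]) (rule exI[of _ "[]"], rule exI[of _ "[]"], simp)
next
  case (Cons i p)
  have ne: "sub (child t i) p \<noteq> Empty" using Cons.prems by simp
  then have cne: "child t i \<noteq> Empty" by auto
  from Cons.IH[OF ne] obtain A us vs where
    e: "cliques (child t i) = us @ map ((\<union>) A) (cliques (sub (child t i) p)) @ vs" by blast
  have mm: "\<And>B X. map ((\<union>) B) (map ((\<union>) A) X) = map ((\<union>) (B \<union> A)) X"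
    by (auto simp: Un_assoc)
  show ?case
  proof (cases t)
    case Empty
    then show ?thesis using cne by simp
  next
    case (PN S cs)
    then have i: "i < length cs" using cne by (cases "i < length cs") auto
    then have ci: "child t i = cs!i" using PN by simp
    have e': "cliques (cs!i) = us @ map ((\<union>) A) (cliques (sub t (i#p))) @ vs" using e ci by simp
    have "cs \<noteq> []" using i by auto
    then have h1: "cliques t = concat (map (\<lambda>c. map ((\<union>) S) (cliques c)) cs)" using PN by simp
    have h2: "concat (map (\<lambda>c. map ((\<union>) S) (cliques c)) cs) = concat (map (\<lambda>c. map ((\<union>) S) (cliques c)) (take i cs)) @
       map ((\<union>) S) (cliques (cs!i)) @
       concat (map (\<lambda>c. map ((\<union>) S) (cliques c)) (drop (Suc i) cs))"
      by (rule cm_split[OF i])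
    have h3: "map ((\<union>) S) (cliques (cs!i)) = map ((\<union>) S) us @ map ((\<union>) (S \<union> A)) (cliques (sub t (i#p))) @ map ((\<union>) S) vs"
      by (simp only: e' map_append mm)
    have "cliques t = (concat (map (\<lambda>c. map ((\<union>) S) (cliques c)) (take i cs)) @ map ((\<union>) S) us) @ map ((\<union>) (S \<union> A)) (cliques (sub t (i#p))) @ (map ((\<union>) S) vs @ concat (map (\<lambda>c. map ((\<union>) S) (cliques c)) (drop (Suc i) cs)))"
      by (simp only: h1 h2 h3 append.assoc)
    then show ?thesis by blast
  next
    case (QN secs)
    then have i: "i < length secs" using cne by (cases "i < length secs") auto
    then have ci: "child t i = snd (secs!i)" using QN by simp
    have e': "cliques (snd (secs!i)) = us @ map ((\<union>) A) (cliques (sub t (i#p))) @ vs" using e ci by simp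
    let ?g = "(\<lambda>p. if snd p = Empty then [fst p] else map ((\<union>) (fst p)) (cliques (snd p)))"
    have h1: "cliques t = concat (map ?g secs)" using QN by simp
    have h2: "concat (map ?g secs) = concat (map ?g (take i secs)) @ ?g (secs!i) @ concat (map ?g (drop (Suc i) secs))"
      by (rule cm_split[OF i])
    have h3: "?g (secs!i) = map ((\<union>) (fst (secs!i))) (cliques (snd (secs!i)))"
      using ci cne by simp
    have h4: "map ((\<union>) (fst (secs!i))) (cliques (snd (secs!i))) = map ((\<union>) (fst (secs!i))) us @ map ((\<union>) (fst (secs!i) \<union> A)) (cliques (sub t (i#p))) @ map ((\<union>) (fst (secs!i))) vs"
      by (simp only: e' map_append mm)
    have "cliques t = (concat (map ?g (take i secs)) @ map ((\<union>) (fst (secs!i))) us) @ map ((\<union>) (fst (secs!i) \<union> A)) (cliques (sub t (i#p))) @ (map ((\<union>) (fst (secs!i))) vs @ concat (map ?g (drop (Suc i) secs)))"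
      using h1 h2 h4 ci cne by (simp del: cliques.simps)
    then show ?thesis by blast
  qed
qed

lemma block: "distinct (concat (map h xs)) \<Longrightarrow> i < length xs \<Longrightarrow> j < length xs \<Longrightarrow> i \<noteq> j
  \<Longrightarrow> z \<in> set (h (xs!i)) \<Longrightarrow> z \<in> set (h (xs!j)) \<Longrightarrow> False"
proof -
  have main: "distinct (concat (map h xs)) \<Longrightarrow> i < j \<Longrightarrow> j < length xs
     \<Longrightarrow> z \<in> set (h (xs!i)) \<Longrightarrow> z \<in> set (h (xs!j)) \<Longrightarrow> False" for i j
  proof -
    assume d: "distinct (concat (map h xs))" and ij: "i < j" "j < length xs"
      and zi: "z \<in> set (h (xs!i))" and zj: "z \<in> set (h (xs!j))"
    have sp: "concat (map h xs) = concat (map h (take j xs)) @ h (xs!j) @ concat (map h (drop (Suc j) xs))"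
      by (rule cm_split) (use ij in auto)
    have "xs!i \<in> set (take j xs)" using ij
      by (metis in_set_conv_nth length_take min.absorb4 nth_take order.strict_trans)
    then have "z \<in> set (concat (map h (take j xs)))" using zi by auto
    moreover have "z \<in> set (h (xs!j) @ concat (map h (drop (Suc j) xs)))" using zj by auto
    ultimately show False using d sp by (metis disjoint_iff distinct_append)
  qed
  assume "distinct (concat (map h xs))" "i < length xs" "j < length xs" "i \<noteq> j"
    "z \<in> set (h (xs!i))" "z \<in> set (h (xs!j))"
  then show False using main[of i j] main[of j i] by (cases "i < j") auto
qed

lemma max_ext: "finite V \<Longrightarrow> is_clique V E K \<Longrightarrow> \<exists>C. max_clique V E C \<and> K \<subseteq> C"
proof -
  assume fin: "finite V" and K: "is_clique V E K"
  let ?M = "{D. is_clique V E D \<and> K \<subseteq> D}"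
  have "?M \<subseteq> Pow V" by (auto simp: is_clique_def)
  then have "finite ?M" using fin by (meson finite_Pow_iff finite_subset)
  moreover have "K \<in> ?M" using K by auto
  ultimately obtain m where m: "m \<in> ?M" "K \<le> m" "\<forall>b\<in>?M. m \<le> b \<longrightarrow> m = b"
    using finite_has_maximal2[of ?M K] by blast
  have "max_clique V E m" unfolding max_clique_def using m by auto
  then show ?thesis using m by blast
qed

lemma c4: "interval_graph V E' \<Longrightarrow> a \<in> V \<Longrightarrow> b \<in> V \<Longrightarrow> x \<in> V \<Longrightarrow> y \<in> V
  \<Longrightarrow> a \<noteq> x \<Longrightarrow> a \<noteq> y \<Longrightarrow> b \<noteq> x \<Longrightarrow> b \<noteq> y \<Longrightarrow> a \<noteq> b \<Longrightarrow> x \<noteq> y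
  \<Longrightarrow> {a,x} \<in> E' \<Longrightarrow> {a,y} \<in> E' \<Longrightarrow> {b,x} \<in> E' \<Longrightarrow> {b,y} \<in> E'
  \<Longrightarrow> {x,y} \<notin> E' \<Longrightarrow> {a,b} \<notin> E' \<Longrightarrow> False"
  unfolding interval_graph_def
proof (elim conjE exE)
  fix l r :: "nat \<Rightarrow> real"
  assume H: "\<forall>u\<in>V. \<forall>v\<in>V. u \<noteq> v \<longrightarrow> ({u, v} \<in> E' \<longleftrightarrow> max (l u) (l v) \<le> min (r u) (r v))"
    and "a \<in> V" "b \<in> V" "x \<in> V" "y \<in> V"
    "a \<noteq> x" "a \<noteq> y" "b \<noteq> x" "b \<noteq> y" "a \<noteq> b" "x \<noteq> y"
    "{a,x} \<in> E'" "{a,y} \<in> E'" "{b,x} \<in> E'" "{b,y} \<in> E'" "{x,y} \<notin> E'" "{a,b} \<notin> E'"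
  then have "max (l a) (l x) \<le> min (r a) (r x)" "max (l a) (l y) \<le> min (r a) (r y)"
    "max (l b) (l x) \<le> min (r b) (r x)" "max (l b) (l y) \<le> min (r b) (r y)"
    "\<not> max (l x) (l y) \<le> min (r x) (r y)" "\<not> max (l a) (l b) \<le> min (r a) (r b)"
    by (meson)+
  then show False by (simp add: max_def min_def split: if_splits; linarith)
qed

theorem mainTheorem10:
  fixes n :: nat and E :: "nat set set" and t :: mpq and x y :: nat
    and S :: "nat set" and cs :: "mpq list"
  assumes "interval_graph {1..n} E"
    and "is_MPQ_tree {1..n} E t"
    and "{x, y} \<in> E"
    and "over t x y"
    and "node t x \<noteq> node t y"
    and "sub t (node t y) = PN S cs"
    and "cs \<noteq> []"
  shows "\<not> interval_edge {1..n} E x y"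
proof
  assume IE: "interval_edge {1..n} E x y"
  define V where "V = {1..n::nat}"
  have fin: "finite V" unfolding V_def by simp
  have sg: "simple_graph V E" using assms(1) unfolding V_def interval_graph_def by blast
  obtain u v where uv: "{x,y} = {u,v}" "u \<in> V" "v \<in> V" "u \<noteq> v"
    using sg assms(3) unfolding simple_graph_def by blast
  have xV: "x \<in> V" and yV: "y \<in> V" and xy: "x \<noteq> y"
    using uv by (auto simp: doubleton_eq_iff)
  have T: "is_MPQ_tree V E t" using assms(2) V_def by simp
  have VV: "\<forall>v\<in>V. (\<exists>!p. occurs t v p) \<and>
        (\<forall>p secs. occurs t v p \<and> sub t p = QN secs \<longrightarrow>
           (\<exists>l r. l < r \<and> {i. i < length secs \<and> v \<in> fst (secs ! i)} = {l..r}))"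
    using T unfolding is_MPQ_tree_def by (elim conjE) assumption
  have uniq: "\<forall>v\<in>V. \<exists>!p. occurs t v p" using VV by blast
  have setcl: "set (cliques t) = {C. max_clique V E C}" using T unfolding is_MPQ_tree_def by (elim conjE) assumption
  have dist: "distinct (cliques t)" using T unfolding is_MPQ_tree_def by (elim conjE) assumption
  have Qc0: "\<forall>p secs. sub t p = QN secs \<longrightarrow> Q_conditions secs" using T unfolding is_MPQ_tree_def by (elim conjE) assumption
  have Pc0: "\<forall>p S cs. sub t p = PN S cs \<longrightarrow> P_conditions S cs" using T unfolding is_MPQ_tree_def by (elim conjE) assumption
  have Qc: "\<And>p secs. sub t p = QN secs \<Longrightarrow> Q_conditions secs" using Qc0 by blast
  have Pc: "\<And>p S cs. sub t p = PN S cs \<Longrightarrow> P_conditions S cs" using Pc0 by blast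
  have wft: "wf t" unfolding wf_def
  proof (intro conjI allI impI)
    fix p S cs assume "sub t p = PN S cs"
    then show "\<forall>c\<in>set cs. c \<noteq> Empty" using Pc unfolding P_conditions_def by blast
  next
    fix p secs assume "sub t p = QN secs"
    then have "Q_conditions secs" by (rule Qc)
    then show "secs \<noteq> []" unfolding Q_conditions_def Let_def by auto
  qed
  have occ: "\<And>v. v \<in> V \<Longrightarrow> occurs t v (node t v)"
    unfolding node_def using uniq by (metis theI')
  have nodeeq: "\<And>v p. v \<in> V \<Longrightarrow> occurs t v p \<Longrightarrow> node t v = p"
    unfolding node_def using uniq by (metis the1_equality)
  have clmax: "\<And>C. C \<in> set (cliques t) \<Longrightarrow> max_clique V E C" using setcl by auto
  define px where "px = node t x"
  define py where "py = node t y"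
  obtain q0 where q0: "py = px @ q0" using assms(4) unfolding over_def px_def py_def by blast
  have "q0 \<noteq> []" using q0 assms(5) px_def py_def by auto
  then obtain i q where pyx: "py = px @ i # q" using q0 by (cases q0) auto
  have subpy: "sub t py = PN S cs" using assms(6) py_def by simp
  have yS: "y \<in> S" using occ[OF yV] subpy unfolding py_def occurs_def by simp
  have X: "x \<in> at_set (sub t px) i"
  proof -
    have "is_clique V E {x,y}" unfolding is_clique_def using xV yV assms(3)
      by (auto simp: insert_commute)
    from max_ext[OF fin this] obtain C0 where C0: "max_clique V E C0" "{x,y} \<subseteq> C0" by blast
    then have "C0 \<in> set (cliques t)" using setcl by auto
    from cliques_cpath[OF this] obtain P0 where P0: "cpath t P0 C0" by blast
    from F2[OF P0, of y] C0 obtain k where k: "k \<le> length P0" "occurs t y (take k P0)" by auto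
    have tk: "take k P0 = py" using nodeeq[OF yV k(2)] py_def by simp
    from F2[OF P0, of x] C0 obtain k' where k': "k' \<le> length P0"
      "x \<in> at_set (sub t (take k' P0)) (P0!k')" "occurs t x (take k' P0)" by auto
    have tk': "take k' P0 = px" using nodeeq[OF xV k'(3)] px_def by simp
    have lk': "length px = k'" using tk' k'(1) by auto
    have lk: "length py = k" using tk k(1) by auto
    have "P0 ! length px = i"
    proof -
      have "length px < k" using lk pyx by auto
      then have "P0 ! length px = take k P0 ! length px" by simp
      also have "\<dots> = i" using tk pyx by simp
      finally show ?thesis .
    qed
    then show ?thesis using k'(2) tk' lk' by simp
  qed
  have good: "\<And>P C j. cpath t P C \<Longrightarrow> take (Suc (length py)) P = py @ [j] \<Longrightarrow> x \<in> C \<and> y \<in> C"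
  proof -
    fix P C j assume P: "cpath t P C" and tk: "take (Suc (length py)) P = py @ [j]"
    have "length (take (Suc (length py)) P) = Suc (length py)" using tk by simp
    then have len: "Suc (length py) \<le> length P" by simp
    have "take (length py) P = take (length py) (take (Suc (length py)) P)" by simp
    also have "\<dots> = py" using tk by simp
    finally have tpy: "take (length py) P = py" .
    have "at_set (sub t (take (length py) P)) (P ! length py) \<subseteq> C" using F3[OF P] len by simp
    then have yC: "y \<in> C" using tpy subpy yS by auto
    have lt: "length px < length py" using pyx by simp
    have tpx: "take (length px) P = px"
    proof -
      have "take (length px) P = take (length px) (take (length py) P)" using lt by simp
      also have "\<dots> = px" using tpy pyx by simp
      finally show ?thesis .
    qed
    have Pi: "P ! length px = i"
    proof -
      have "P ! length px = take (length py) P ! length px" using lt by simp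
      also have "\<dots> = i" using tpy pyx by simp
      finally show ?thesis .
    qed
    have "at_set (sub t (take (length px) P)) (P ! length px) \<subseteq> C" using F3[OF P] len lt by simp
    then have "x \<in> C" using tpx Pi X by auto
    then show "x \<in> C \<and> y \<in> C" using yC by simp
  qed
  have vert: "\<And>v j p. occurs t v (py @ j # p) \<Longrightarrow> v \<in> V \<and> node t v = py @ j # p \<and>
       {v,x} \<in> E \<and> {v,y} \<in> E \<and> v \<noteq> x \<and> v \<noteq> y"
  proof -
    fix v j p assume o: "occurs t v (py @ j # p)"
    from through[OF wft o] obtain P C where PC: "cpath t P C" "v \<in> C" by blast
    have mc: "max_clique V E C" using clmax cpath_cliques[OF PC(1)] by blast
    then have cl: "is_clique V E C" unfolding max_clique_def by simp
    then have vV: "v \<in> V" using PC(2) unfolding is_clique_def by auto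
    have nv: "node t v = py @ j # p" using nodeeq[OF vV o] .
    from F2[OF PC] obtain k where k: "k \<le> length P" "occurs t v (take k P)" by auto
    have tk: "take k P = py @ j # p" using nodeeq[OF vV k(2)] nv by simp
    have "length (take k P) = k" using k(1) by simp
    then have lk: "k = length (py @ j # p)" using tk by simp
    have "take (Suc (length py)) P = take (Suc (length py)) (take k P)" using lk by simp
    also have "\<dots> = py @ [j]" using tk by simp
    finally have "x \<in> C \<and> y \<in> C" using good[OF PC(1)] by blast
    moreover have "v \<noteq> x"
    proof
      assume "v = x"
      then have "px = py @ j # p" using nv px_def by simp
      then show False using pyx by simp
    qed
    moreover have "v \<noteq> y"
    proof
      assume "v = y"
      then have "py = py @ j # p" using nv py_def by simp
      then show False by simp
    qed
    ultimately show "v \<in> V \<and> node t v = py @ j # p \<and> {v,x} \<in> E \<and> {v,y} \<in> E \<and> v \<noteq> x \<and> v \<noteq> y"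
      using cl PC(2) vV nv unfolding is_clique_def by blast
  qed
  have nonadj: "\<And>a b pre ja jb pa pb. a \<in> V \<Longrightarrow> b \<in> V \<Longrightarrow> node t a = pre @ ja # pa \<Longrightarrow>
      node t b = pre @ jb # pb \<Longrightarrow> ja \<noteq> jb \<Longrightarrow> {a,b} \<notin> E"
  proof
    fix a b pre ja jb pa pb assume aV: "a \<in> V" and bV: "b \<in> V" and na: "node t a = pre @ ja # pa"
      and nb: "node t b = pre @ jb # pb" and jj: "ja \<noteq> jb" and ab: "{a,b} \<in> E"
    have "a \<noteq> b" using na nb jj by auto
    then have "is_clique V E {a,b}" unfolding is_clique_def using aV bV ab
      by (auto simp: insert_commute)
    from max_ext[OF fin this] obtain C where C: "max_clique V E C" "{a,b} \<subseteq> C" by blast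
    then have "C \<in> set (cliques t)" using setcl by auto
    from cliques_cpath[OF this] obtain P where P: "cpath t P C" by blast
    from F2[OF P, of a] C obtain ka where ka: "ka \<le> length P" "occurs t a (take ka P)" by auto
    from F2[OF P, of b] C obtain kb where kb: "kb \<le> length P" "occurs t b (take kb P)" by auto
    have ta: "take ka P = pre @ ja # pa" using nodeeq[OF aV ka(2)] na by simp
    have tb: "take kb P = pre @ jb # pb" using nodeeq[OF bV kb(2)] nb by simp
    have "length (take ka P) = ka" using ka(1) by simp
    then have lka: "ka = length (pre @ ja # pa)" using ta by simp
    have TA: "take (Suc (length pre)) P = pre @ [ja]"
    proof -
      have "take (Suc (length pre)) P = take (Suc (length pre)) (take ka P)" using lka by simp
      also have "\<dots> = pre @ [ja]" using ta by simp
      finally show ?thesis .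
    qed
    have "length (take kb P) = kb" using kb(1) by simp
    then have lkb: "kb = length (pre @ jb # pb)" using tb by simp
    have TB: "take (Suc (length pre)) P = pre @ [jb]"
    proof -
      have "take (Suc (length pre)) P = take (Suc (length pre)) (take kb P)" using lkb by simp
      also have "\<dots> = pre @ [jb]" using tb by simp
      finally show ?thesis .
    qed
    show False using TA TB jj by simp
  qed
  have IG: "interval_graph V (E - {{x,y}})" using IE unfolding interval_edge_def V_def by blast
  have finish: "\<And>a b. a \<in> V \<Longrightarrow> b \<in> V \<Longrightarrow> {a,x} \<in> E \<Longrightarrow> {a,y} \<in> E \<Longrightarrow> {b,x} \<in> E
     \<Longrightarrow> {b,y} \<in> E \<Longrightarrow> a \<noteq> x \<Longrightarrow> a \<noteq> y \<Longrightarrow> b \<noteq> x \<Longrightarrow> b \<noteq> y \<Longrightarrow> {a,b} \<notin> E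
     \<Longrightarrow> a \<noteq> b \<Longrightarrow> False"
  proof -
    fix a b assume H: "a \<in> V" "b \<in> V" "{a,x} \<in> E" "{a,y} \<in> E" "{b,x} \<in> E"
     "{b,y} \<in> E" "a \<noteq> x" "a \<noteq> y" "b \<noteq> x" "b \<noteq> y" "{a,b} \<notin> E" "a \<noteq> b"
    show False
      apply (rule c4[OF IG H(1) H(2) xV yV H(7) H(8) H(9) H(10) H(12) xy])
      using H by (auto simp: doubleton_eq_iff)
  qed
  have noteq: "\<And>a b pre ja jb pa pb. node t a = pre @ ja # pa \<Longrightarrow> node t b = pre @ jb # pb \<Longrightarrow> ja \<noteq> jb \<Longrightarrow> a \<noteq> b"
    by auto
  show False
  proof (cases "length cs \<ge> 2")
    case True
    have child: "\<And>j j'. j < length cs \<Longrightarrow> j' < length cs \<Longrightarrow> j \<noteq> j' \<Longrightarrow> \<exists>v p. occurs t v (py @ j # p)"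
    proof -
      fix j j' assume j: "j < length cs" and j': "j' < length cs" and jj: "j \<noteq> j'"
      have ne: "sub t py \<noteq> Empty" using subpy by simp
      from decomp[OF ne] obtain A us vs where dc: "cliques t = us @ map ((\<union>) A) (cliques (sub t py)) @ vs" by blast
      let ?f = "\<lambda>c. map ((\<union>) S) (cliques c)"
      have cp: "cliques (sub t py) = concat (map ?f cs)" using subpy assms(7) by simp
      have subj: "\<And>m. m < length cs \<Longrightarrow> sub t (py @ [m]) = cs ! m" using subpy by (simp add: sub_append)
      have cne: "\<And>m. m < length cs \<Longrightarrow> cs ! m \<noteq> Empty" using Pc[OF subpy] unfolding P_conditions_def
        by (meson nth_mem)
      have cwf: "\<And>m. m < length cs \<Longrightarrow> wf (cs ! m)" using wf_sub[OF wft] subj by metis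
      obtain P D where PD: "cpath (cs!j) P D" using ext[OF cwf cne] j by blast
      obtain P' D' where PD': "cpath (cs!j') P' D'" using ext[OF cwf cne] j' by blast
      show "\<exists>v p. occurs t v (py @ j # p)"
      proof (cases "D = {}")
        case False
        then obtain v where "v \<in> D" by blast
        from F2[OF PD this] obtain k where "occurs (cs!j) v (take k P)" by blast
        then have "occurs t v ((py @ [j]) @ take k P)" by (simp only: occurs_append[of t v "py @ [j]"] subj[OF j])
        then show ?thesis by auto
      next
        case True
        have De: "D \<in> set (cliques (cs!j))" using cpath_cliques[OF PD] .
        have De': "D' \<in> set (cliques (cs!j'))" using cpath_cliques[OF PD'] .
        have inL: "A \<union> (S \<union> Z) \<in> set (cliques t)" if m: "m < length cs" and Z: "Z \<in> set (cliques (cs!m))" for m Z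
        proof -
          have "cs!m \<in> set cs" using m by simp
          then have "S \<union> Z \<in> set (concat (map ?f cs))" using Z by auto
          then show ?thesis unfolding dc cp by auto
        qed
        have m1: "max_clique V E (A \<union> (S \<union> D))" using clmax inL[OF j De] by blast
        have m2: "max_clique V E (A \<union> (S \<union> D'))" using clmax inL[OF j' De'] by blast
        have sub1: "A \<union> (S \<union> D) \<subseteq> A \<union> (S \<union> D')" using True by auto
        have eq: "A \<union> (S \<union> D') = A \<union> (S \<union> D)"
          using m1 m2 sub1 unfolding max_clique_def by blast
        have "distinct (map ((\<union>) A) (concat (map ?f cs)))" using dist unfolding dc cp by simp
        then have dd: "distinct (concat (map (\<lambda>c. map ((\<union>) A) (?f c)) cs))"
          by (simp add: map_concat comp_def)
        have z1: "A \<union> (S \<union> D) \<in> set ((\<lambda>c. map ((\<union>) A) (?f c)) (cs!j))" using De by auto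
        have z2: "A \<union> (S \<union> D) \<in> set ((\<lambda>c. map ((\<union>) A) (?f c)) (cs!j'))" using De' eq
          by (metis (no_types, lifting) image_eqI list.set_map)
        show ?thesis using block[OF dd j j' jj z1 z2] by simp
      qed
    qed
    obtain a pa where a: "occurs t a (py @ 0 # pa)" using child[of 0 1] True assms(7) by force
    obtain b pb where b: "occurs t b (py @ 1 # pb)" using child[of 1 0] True by force
    have A: "a \<in> V \<and> node t a = py @ 0 # pa \<and> {a,x} \<in> E \<and> {a,y} \<in> E \<and> a \<noteq> x \<and> a \<noteq> y"
      by (rule vert[OF a])
    have B: "b \<in> V \<and> node t b = py @ 1 # pb \<and> {b,x} \<in> E \<and> {b,y} \<in> E \<and> b \<noteq> x \<and> b \<noteq> y"
      by (rule vert[OF b])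
    have "{a,b} \<notin> E" using nonadj[of a b py 0 pa 1 pb] A B by simp
    moreover have "a \<noteq> b" using noteq[of a py 0 pa b 1 pb] A B by simp
    ultimately show False using finish[of a b] A B by blast
  next
    case False
    then obtain c where c: "cs = [c]" using assms(7)
      by (cases cs) (auto simp: Suc_le_eq)
    have PC: "P_conditions S cs" using Pc[OF subpy] .
    then have "c \<noteq> Empty" "\<not> is_PN c" unfolding P_conditions_def c by auto
    then obtain secs where sc: "c = QN secs" by (cases c) (auto simp: is_PN_def)
    have subq: "sub t (py @ [0]) = QN secs" using subpy c sc by (simp add: sub_append)
    have Q: "Q_conditions secs" using Qc[OF subq] .
    then have k3: "length secs \<ge> 3" and W0: "labels (snd (secs!0)) \<noteq> {}"
      and Wk: "labels (snd (secs ! (length secs - 1))) \<noteq> {}"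
      unfolding Q_conditions_def Let_def by auto
    have subs: "\<And>m. m < length secs \<Longrightarrow> sub t (py @ [0, m]) = snd (secs!m)"
    proof -
      fix m assume "m < length secs"
      have "sub t (py @ [0, m]) = sub (sub t (py @ [0])) [m]"
        by (metis append_Cons append_Nil append_assoc sub_append)
      then show "sub t (py @ [0, m]) = snd (secs!m)" using subq \<open>m < length secs\<close> by simp
    qed
    obtain a where "a \<in> labels (snd (secs!0))" using W0 by blast
    then obtain pa where "occurs (snd (secs!0)) a pa" using labels_occurs by blast
    moreover have "sub t (py @ [0, 0]) = snd (secs!0)" using subs[of 0] k3 by force
    ultimately have "occurs t a ((py @ [0, 0]) @ pa)" by (simp only: occurs_append[of t a "py @ [0,0]"])
    then have a: "occurs t a (py @ 0 # (0 # pa))" by simp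
    obtain b where "b \<in> labels (snd (secs!(length secs - 1)))" using Wk by blast
    then obtain pb where "occurs (snd (secs!(length secs - 1))) b pb" using labels_occurs by blast
    moreover have "sub t (py @ [0, length secs - 1]) = snd (secs!(length secs - 1))" using subs[of "length secs - 1"] k3 by force
    ultimately have "occurs t b ((py @ [0, length secs - 1]) @ pb)" by (simp only: occurs_append[of t b "py @ [0, length secs - 1]"])
    then have b: "occurs t b (py @ 0 # ((length secs - 1) # pb))" by simp
    have A: "a \<in> V \<and> node t a = py @ 0 # (0 # pa) \<and> {a,x} \<in> E \<and> {a,y} \<in> E \<and> a \<noteq> x \<and> a \<noteq> y"
      by (rule vert[OF a])
    have B: "b \<in> V \<and> node t b = py @ 0 # ((length secs - 1) # pb) \<and> {b,x} \<in> E \<and> {b,y} \<in> E \<and> b \<noteq> x \<and> b \<noteq> y"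
      by (rule vert[OF b])
    have na: "node t a = (py @ [0]) @ 0 # pa" using A by simp
    have nb: "node t b = (py @ [0]) @ (length secs - 1) # pb" using B by simp
    have jj: "(0::nat) \<noteq> length secs - 1" using k3 by simp
    have "{a,b} \<notin> E" using nonadj[OF _ _ na nb jj] A B by simp
    moreover have "a \<noteq> b" using noteq[OF na nb jj] .
    ultimately show False using finish[of a b] A B by blast
  qed
qed

end
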